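(* Let ${\bold H}$ be a function with domain $\omega$ whose values ${\bold H}(i)$ are countable sets with at least two elements, and let $\bar n\in\mathbf{N}$. Then (1) $\mathbb{Q}^{\bold H}_{\bar n}$ is a forcing notion (i.e. its order is a preorder), and (2) for $p,q\in\mathbb{Q}^{\bold H}_{\bar n}$, $p\leq q$ holds if and only if $w^p\subseteq w^q$ and for each $i\in\omega$ either there is $j\in\omega$ with $\sigma^q_j\subseteq\sigma^p_i$, or there is $m\in\mathrm{dom}(w^q)\cap\mathrm{dom}(\sigma^p_i)$ with $w^q(m)\neq\sigma^p_i(m)$.
   Context: $\mathbf{N}$ is the set of sequences $\bar n=\langle n^0_m,n^1_m:m<\omega\rangle$ of integers with $4<n^0_m\leq n^1_m<n^0_{m+1}$ for all $m$, $2^{2(m^*+2)}\sum_{m<m^*}n^0_m n^1_m<n^0_{m^*}$ for every $m^*\in\omega$, and $\lim_{m\to\infty}(n^1_m)^{1/(2n^0_m)}=\infty$. Conditions of $\mathbb{Q}^{\bold H}_{\bar n}$ are sequences $p=(w^p,\sigma^p_0,\sigma^p_1,\dots)$ of finite functions with pairwise disjoint domains, $w^p(i),\sigma^p_j(i)\in{\bold H}(i)$, such that for some $m^*=m^*(p)<\omega$ there is a partition $\langle V^p_m:m^*\leq m<\omega\rangle$ of $\omega$ with $|V^p_m|\leq n^1_m2^{m^*}$ and $|\mathrm{dom}(\sigma^p_j)|\geq n^0_m/2^{m^*}$ for $j\in V^p_m$. $\mathrm{POS}(p)=\{\eta\in\prod_{i\in\omega}{\bold H}(i): w^p\subseteq\eta,\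 \sigma^p_j\not\subseteq\eta\text{ for all }j\}$, and $p\leq q$ iff $\mathrm{POS}(q)\subseteq\mathrm{POS}(p)$. *)

theory Defs
  imports Complex_Main "HOL-Library.Countable_Set"
begin

definition nbar_N :: "(nat \<Rightarrow> nat) \<Rightarrow> (nat \<Rightarrow> nat) \<Rightarrow> bool" where
  "nbar_N n0 n1 \<longleftrightarrow>
     (\<forall>m. 4 < n0 m \<and> n0 m \<le> n1 m \<and> n1 m < n0 (Suc m)) \<and>
     (\<forall>ms. 2 ^ (2 * (ms + 2)) * (\<Sum>m<ms. n0 m * n1 m) < n0 ms) \<and>
     filterlim (\<lambda>m. real (n1 m) powr (1 / (2 * real (n0 m)))) at_top sequentially"

text \<open>A condition p = (w^p, sigma^p_0, sigma^p_1, ...), finite partial functions.\<close>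
type_synonym 'a qcond = "(nat \<rightharpoonup> 'a) \<times> (nat \<Rightarrow> (nat \<rightharpoonup> 'a))"

definition is_cond :: "(nat \<Rightarrow> 'a set) \<Rightarrow> (nat \<Rightarrow> nat) \<Rightarrow> (nat \<Rightarrow> nat) \<Rightarrow> 'a qcond \<Rightarrow> bool" where
  "is_cond H n0 n1 p \<longleftrightarrow>
     (let w = fst p; \<sigma> = snd p in
       finite (dom w) \<and> (\<forall>j. finite (dom (\<sigma> j))) \<and>
       (\<forall>j. dom w \<inter> dom (\<sigma> j) = {}) \<and>
       (\<forall>j k. j \<noteq> k \<longrightarrow> dom (\<sigma> j) \<inter> dom (\<sigma> k) = {}) \<and>
       (\<forall>i a. w i = Some a \<longrightarrow> a \<in> H i) \<and>
       (\<forall>j i a. \<sigma> j i = Some a \<longrightarrow> a \<in> H i) \<and>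
       (\<exists>ms. \<exists>V :: nat \<Rightarrow> nat set.
          (\<forall>j. \<exists>!m. ms \<le> m \<and> j \<in> V m) \<and>
          (\<forall>m\<ge>ms. finite (V m) \<and> card (V m) \<le> n1 m * 2 ^ ms) \<and>
          (\<forall>m\<ge>ms. \<forall>j\<in>V m. real (card (dom (\<sigma> j))) \<ge> real (n0 m) / 2 ^ ms)))"

definition Qcond :: "(nat \<Rightarrow> 'a set) \<Rightarrow> (nat \<Rightarrow> nat) \<Rightarrow> (nat \<Rightarrow> nat) \<Rightarrow> 'a qcond set" where
  "Qcond H n0 n1 = {p. is_cond H n0 n1 p}"

definition POS :: "(nat \<Rightarrow> 'a set) \<Rightarrow> 'a qcond \<Rightarrow> (nat \<Rightarrow> 'a) set" where
  "POS H p = {\<eta>. (\<forall>i. \<eta> i \<in> H i) \<and> fst p \<subseteq>\<^sub>m (Some \<circ> \<eta>) \<and>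
                  (\<forall>j. \<not> (snd p j \<subseteq>\<^sub>m (Some \<circ> \<eta>)))}"

definition Qle :: "(nat \<Rightarrow> 'a set) \<Rightarrow> 'a qcond \<Rightarrow> 'a qcond \<Rightarrow> bool" where
  "Qle H p q \<longleftrightarrow> POS H q \<subseteq> POS H p"

definition Qorder :: "(nat \<Rightarrow> 'a set) \<Rightarrow> (nat \<Rightarrow> nat) \<Rightarrow> (nat \<Rightarrow> nat) \<Rightarrow> ('a qcond \<times> 'a qcond) set" where
  "Qorder H n0 n1 = {(p, q). p \<in> Qcond H n0 n1 \<and> q \<in> Qcond H n0 n1 \<and> Qle H p q}"

end

theory Submission
  imports Defs
begin

lemma exists_eta:
  fixes H :: "nat \<Rightarrow> 'a set" and f :: "nat \<rightharpoonup> 'a" and \<sigma> :: "nat \<Rightarrow> (nat \<rightharpoonup> 'a)"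
  assumes two: "\<And>i. \<exists>a b. a \<in> H i \<and> b \<in> H i \<and> a \<noteq> b"
    and disj: "\<And>j k. j \<noteq> k \<Longrightarrow> dom (\<sigma> j) \<inter> dom (\<sigma> k) = {}"
    and fH: "\<And>i a. f i = Some a \<Longrightarrow> a \<in> H i"
    and nsub: "\<And>j. \<not> (\<sigma> j \<subseteq>\<^sub>m f)"
  shows "\<exists>\<eta>. (\<forall>i. \<eta> i \<in> H i) \<and> f \<subseteq>\<^sub>m (Some \<circ> \<eta>) \<and> (\<forall>j. \<not> (\<sigma> j \<subseteq>\<^sub>m (Some \<circ> \<eta>)))"
proof -
  have ex: "\<exists>b. b \<in> H x \<and> (\<forall>j. \<sigma> j x \<noteq> Some b)" for x
  proof -
    obtain a b where ab: "a \<in> H x" "b \<in> H x" "a \<noteq> b" using two by blast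
    show ?thesis
    proof (cases "\<forall>j. \<sigma> j x \<noteq> Some a")
      case True then show ?thesis using ab by blast
    next
      case False
      then obtain j0 where j0: "\<sigma> j0 x = Some a" by blast
      have "\<sigma> j x \<noteq> Some b" for j
      proof
        assume h: "\<sigma> j x = Some b"
        then have "j \<noteq> j0" using j0 ab by auto
        then show False using disj[of j j0] h j0 by blast
      qed
      then show ?thesis using ab by blast
    qed
  qed
  define \<eta> where "\<eta> x = (if x \<in> dom f then the (f x) else (SOME b. b \<in> H x \<and> (\<forall>j. \<sigma> j x \<noteq> Some b)))" for x
  have e2: "x \<notin> dom f \<Longrightarrow> \<eta> x \<in> H x \<and> (\<forall>j. \<sigma> j x \<noteq> Some (\<eta> x))" for x
    unfolding \<eta>_def using someI_ex[OF ex[of x]] by simp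
  have e1: "x \<in> dom f \<Longrightarrow> f x = Some (\<eta> x)" for x
    unfolding \<eta>_def by auto
  have "\<forall>i. \<eta> i \<in> H i"
    using e1 e2 fH by (metis domIff)
  moreover have "f \<subseteq>\<^sub>m (Some \<circ> \<eta>)"
    using e1 by (auto simp: map_le_def)
  moreover have "\<not> (\<sigma> j \<subseteq>\<^sub>m (Some \<circ> \<eta>))" for j
  proof
    assume h: "\<sigma> j \<subseteq>\<^sub>m (Some \<circ> \<eta>)"
    have "\<sigma> j \<subseteq>\<^sub>m f"
      unfolding map_le_def
    proof
      fix x assume x: "x \<in> dom (\<sigma> j)"
      then have s: "\<sigma> j x = Some (\<eta> x)" using h by (auto simp: map_le_def)
      show "\<sigma> j x = f x"
      proof (cases "x \<in> dom f")
        case True then show ?thesis using e1 s by simp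
      next
        case False then show ?thesis using e2 s by blast
      qed
    qed
    then show False using nsub by blast
  qed
  ultimately show ?thesis by blast
qed

lemma n0_mono:
  assumes "nbar_N n0 n1" "a \<le> b" shows "n0 a \<le> n0 b"
proof -
  have "n0 k \<le> n0 (Suc k)" for k using assms(1) unfolding nbar_N_def
    by (metis less_imp_le order.trans)
  then show ?thesis using assms(2) by (simp add: incseq_SucI incseqD)
qed

lemma card_two:
  assumes N: "nbar_N n0 n1" and c: "is_cond H n0 n1 q"
  shows "card (dom (snd q j)) \<ge> 2"
proof -
  obtain ms V where V: "\<forall>j. \<exists>!m. ms \<le> m \<and> j \<in> V m"
     "\<forall>m\<ge>ms. \<forall>j\<in>V m. real (card (dom (snd q j))) \<ge> real (n0 m) / 2 ^ ms"
  proof -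
    have "\<exists>ms V. (\<forall>j. \<exists>!m. ms \<le> m \<and> j \<in> V m) \<and>
          (\<forall>m\<ge>ms. finite (V m) \<and> card (V m) \<le> n1 m * 2 ^ ms) \<and>
     (\<forall>m\<ge>ms. \<forall>j\<in>V m. real (card (dom (snd q j))) \<ge> real (n0 m) / 2 ^ ms)"
      using c unfolding is_cond_def Let_def by (elim conjE) assumption
    then show ?thesis using that by blast
  qed
  obtain m where m: "ms \<le> m" "j \<in> V m" using V(1) by blast
  have cm: "real (card (dom (snd q j))) \<ge> real (n0 m) / 2 ^ ms" using V(2) m by blast
  have g: "2 ^ (2 * (ms + 2)) * (\<Sum>k<ms. n0 k * n1 k) < n0 ms" "4 < n0 0"
    using N unfolding nbar_N_def by auto
  have "2 * 2 ^ ms < n0 ms"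
  proof (cases ms)
    case 0 then show ?thesis using g by simp
  next
    case (Suc k)
    have "n0 0 * n1 0 \<le> (\<Sum>k<ms. n0 k * n1 k)"
      using Suc by (intro member_le_sum) auto
    moreover have "n0 0 * n1 0 \<ge> 1" using N unfolding nbar_N_def
      by (simp add: one_le_mult_iff) (metis less_le_trans zero_less_numeral less_imp_le_nat Suc_leI le_trans)
    ultimately have s1: "(\<Sum>k<ms. n0 k * n1 k) \<ge> 1" by linarith
    have "(2::nat) * 2 ^ ms \<le> 2 ^ (2 * (ms + 2))"
    proof -
      have "(2::nat) * 2 ^ ms = 2 ^ Suc ms" by simp
      also have "\<dots> \<le> 2 ^ (2 * (ms + 2))" by (rule power_increasing) auto
      finally show ?thesis .
    qed
    also have "\<dots> \<le> 2 ^ (2 * (ms + 2)) * (\<Sum>k<ms. n0 k * n1 k)" using s1 by simp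
    finally show ?thesis using g by linarith
  qed
  moreover have "n0 ms \<le> n0 m" using n0_mono[OF N m(1)] .
  ultimately have "2 * 2 ^ ms < n0 m" by linarith
  then have "real (2 * 2 ^ ms) < real (n0 m)" by (simp only: of_nat_less_iff)
  then have "real (n0 m) > 2 * 2 ^ ms" by simp
  then have "real (n0 m) / 2 ^ ms > 2" by (simp add: field_simps)
  then have "real (card (dom (snd q j))) > 1" using cm by linarith
  then show ?thesis by linarith
qed

theorem proposition4p2:
  fixes H :: "nat \<Rightarrow> 'a set" and n0 n1 :: "nat \<Rightarrow> nat"
  assumes "\<And>i. countable (H i)"
    and "\<And>i. \<exists>a b. a \<in> H i \<and> b \<in> H i \<and> a \<noteq> b"
    and "nbar_N n0 n1"
  shows "preorder_on (Qcond H n0 n1) (Qorder H n0 n1) \<and>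
    (\<forall>p\<in>Qcond H n0 n1. \<forall>q\<in>Qcond H n0 n1.
       Qle H p q \<longleftrightarrow>
         (fst p \<subseteq>\<^sub>m fst q \<and>
          (\<forall>i. (\<exists>j. snd q j \<subseteq>\<^sub>m snd p i) \<or>
               (\<exists>m\<in>dom (fst q) \<inter> dom (snd p i). fst q m \<noteq> snd p i m))))"
proof -
  note two = assms(2) and N = assms(3)
  have pre: "preorder_on (Qcond H n0 n1) (Qorder H n0 n1)"
    unfolding preorder_on_def refl_on_def trans_def Qorder_def Qle_def by auto
  have char: "Qle H p q \<longleftrightarrow>
         (fst p \<subseteq>\<^sub>m fst q \<and>
          (\<forall>i. (\<exists>j. snd q j \<subseteq>\<^sub>m snd p i) \<or>
               (\<exists>m\<in>dom (fst q) \<inter> dom (snd p i). fst q m \<noteq> snd p i m)))"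
    if pc: "p \<in> Qcond H n0 n1" and qc: "q \<in> Qcond H n0 n1" for p q
  proof
    have cp: "is_cond H n0 n1 p" and cq: "is_cond H n0 n1 q" using pc qc by (auto simp: Qcond_def)
    have qdisj: "\<And>j k. j \<noteq> k \<Longrightarrow> dom (snd q j) \<inter> dom (snd q k) = {}"
      and qwd: "\<And>j. dom (fst q) \<inter> dom (snd q j) = {}"
      and qwH: "\<And>i a. fst q i = Some a \<Longrightarrow> a \<in> H i"
      using cq unfolding is_cond_def Let_def by auto
    have pwH: "\<And>i a. fst p i = Some a \<Longrightarrow> a \<in> H i"
      and psH: "\<And>j i a. snd p j i = Some a \<Longrightarrow> a \<in> H i"
      using cp unfolding is_cond_def Let_def by auto
    assume le: "Qle H p q"
    have POSq: "\<eta> \<in> POS H q \<Longrightarrow> \<eta> \<in> POS H p" for \<eta> using le unfolding Qle_def by blast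
    have A: "fst p \<subseteq>\<^sub>m fst q"
      unfolding map_le_def
    proof (rule ballI, rule ccontr)
      fix m assume md: "m \<in> dom (fst p)" and ne: "fst p m \<noteq> fst q m"
      obtain a where a: "fst p m = Some a" using md by auto
      obtain b where b: "b \<in> H m" "b \<noteq> a" using two[of m] by metis
      define f where "f = (if m \<in> dom (fst q) then fst q else (fst q)(m \<mapsto> b))"
      have fH: "\<And>i c. f i = Some c \<Longrightarrow> c \<in> H i" using qwH b unfolding f_def
        by (auto split: if_splits)
      have fdom: "dom f \<subseteq> dom (fst q) \<union> {m}" unfolding f_def by auto
      have nsub: "\<not> (snd q j \<subseteq>\<^sub>m f)" for j
      proof -
        have "card (dom (snd q j)) \<ge> 2" using card_two[OF N cq] .
        then have "\<not> dom (snd q j) \<subseteq> {m}"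
          using card_mono[of "{m}" "dom (snd q j)"] by auto
        then obtain x where x: "x \<in> dom (snd q j)" "x \<noteq> m" by blast
        then have "x \<notin> dom (fst q)" using qwd[of j] by blast
        then have "f x = None" using x fdom by blast
        then show ?thesis using x unfolding map_le_def by force
      qed
      obtain \<eta> where \<eta>: "\<forall>i. \<eta> i \<in> H i" "f \<subseteq>\<^sub>m (Some \<circ> \<eta>)" "\<forall>j. \<not> (snd q j \<subseteq>\<^sub>m (Some \<circ> \<eta>))"
        using exists_eta[where H=H and f=f and \<sigma>="snd q", OF two qdisj fH nsub] by blast
      have wf: "fst q \<subseteq>\<^sub>m f" unfolding f_def by (auto simp: map_le_def)
      have "\<eta> \<in> POS H q" unfolding POS_def using \<eta> map_le_trans[OF wf \<eta>(2)] by auto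
      then have "\<eta> \<in> POS H p" by (rule POSq)
      then have "fst p \<subseteq>\<^sub>m (Some \<circ> \<eta>)" unfolding POS_def by auto
      then have e: "\<eta> m = a" using a unfolding map_le_def by force
      have "m \<in> dom f" unfolding f_def by auto
      then have "f m = Some a" using \<eta>(2) e unfolding map_le_def by force
      then show False using ne a b unfolding f_def by (auto split: if_splits)
    qed
    have B: "(\<exists>j. snd q j \<subseteq>\<^sub>m snd p i) \<or>
               (\<exists>m\<in>dom (fst q) \<inter> dom (snd p i). fst q m \<noteq> snd p i m)" for i
    proof (rule ccontr)
      assume "\<not> ?thesis"
      then have n1: "\<And>j. \<not> snd q j \<subseteq>\<^sub>m snd p i"
        and agree: "\<And>m. m \<in> dom (fst q) \<Longrightarrow> m \<in> dom (snd p i) \<Longrightarrow> fst q m = snd p i m" by auto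
      define f where "f = fst q ++ snd p i"
      have fH: "\<And>k c. f k = Some c \<Longrightarrow> c \<in> H k" using qwH psH unfolding f_def
        by (auto simp: map_add_Some_iff)
      have nsub: "\<not> (snd q j \<subseteq>\<^sub>m f)" for j
      proof
        assume h: "snd q j \<subseteq>\<^sub>m f"
        have "snd q j \<subseteq>\<^sub>m snd p i"
          unfolding map_le_def
        proof
          fix x assume x: "x \<in> dom (snd q j)"
          then have "x \<notin> dom (fst q)" using qwd[of j] by blast
          then have "fst q x = None" by auto
          moreover have "snd q j x = f x" using h x unfolding map_le_def by blast
          ultimately show "snd q j x = snd p i x" using x unfolding f_def
            by (auto simp: map_add_def split: option.splits)
        qed
        then show False using n1 by blast
      qed
      obtain \<eta> where \<eta>: "\<forall>i. \<eta> i \<in> H i" "f \<subseteq>\<^sub>m (Some \<circ> \<eta>)" "\<forall>j. \<not> (snd q j \<subseteq>\<^sub>m (Some \<circ> \<eta>))"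
        using exists_eta[where H=H and f=f and \<sigma>="snd q", OF two qdisj fH nsub] by blast
      have wf: "fst q \<subseteq>\<^sub>m f" unfolding f_def map_le_def
        using agree by (auto simp: map_add_def split: option.splits) (metis domI option.inject)
      have sf: "snd p i \<subseteq>\<^sub>m f" unfolding f_def by (rule map_le_map_add)
      have "\<eta> \<in> POS H q" unfolding POS_def using \<eta> map_le_trans[OF wf \<eta>(2)] by auto
      then have "\<eta> \<in> POS H p" by (rule POSq)
      then show False using map_le_trans[OF sf \<eta>(2)] unfolding POS_def by auto
    qed
    show "fst p \<subseteq>\<^sub>m fst q \<and>
          (\<forall>i. (\<exists>j. snd q j \<subseteq>\<^sub>m snd p i) \<or>
               (\<exists>m\<in>dom (fst q) \<inter> dom (snd p i). fst q m \<noteq> snd p i m))" using A B by blast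
  next
    assume R: "fst p \<subseteq>\<^sub>m fst q \<and>
          (\<forall>i. (\<exists>j. snd q j \<subseteq>\<^sub>m snd p i) \<or>
               (\<exists>m\<in>dom (fst q) \<inter> dom (snd p i). fst q m \<noteq> snd p i m))"
    show "Qle H p q" unfolding Qle_def
    proof
      fix \<eta> assume e: "\<eta> \<in> POS H q"
      then have e1: "\<forall>i. \<eta> i \<in> H i" and e2: "fst q \<subseteq>\<^sub>m (Some \<circ> \<eta>)"
        and e3: "\<forall>j. \<not> (snd q j \<subseteq>\<^sub>m (Some \<circ> \<eta>))" unfolding POS_def by auto
      have "\<not> (snd p i \<subseteq>\<^sub>m (Some \<circ> \<eta>))" for i
      proof
        assume h: "snd p i \<subseteq>\<^sub>m (Some \<circ> \<eta>)"
        from R have "(\<exists>j. snd q j \<subseteq>\<^sub>m snd p i) \<or>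
               (\<exists>m\<in>dom (fst q) \<inter> dom (snd p i). fst q m \<noteq> snd p i m)" by blast
        then show False
        proof
          assume "\<exists>j. snd q j \<subseteq>\<^sub>m snd p i"
          then show False using e3 h map_le_trans by blast
        next
          assume "\<exists>m\<in>dom (fst q) \<inter> dom (snd p i). fst q m \<noteq> snd p i m"
          then obtain m where m: "m \<in> dom (fst q)" "m \<in> dom (snd p i)" "fst q m \<noteq> snd p i m" by blast
          have "fst q m = Some (\<eta> m)" using e2 m(1) unfolding map_le_def by force
          moreover have "snd p i m = Some (\<eta> m)" using h m(2) unfolding map_le_def by force
          ultimately show False using m(3) by simp
        qed
      qed
      then show "\<eta> \<in> POS H p" unfolding POS_def using e1 map_le_trans[OF _ e2] R by auto
    qed
  qed
  show ?thesis using pre char by blast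
qed

end
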